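(* Let $A\in\mathbb{R}^{n\times n}$ be nonsingular, $B\in\mathbb{R}^{n\times m}$, $N\geq1$ an integer, $\Omega=\{x\in\mathbb{R}^n: Hx\leq h\}$ bounded with $H\in\mathbb{R}^{n_h\times n}$, $X=\{y\in\mathbb{R}^n:Fy\leq f\}$ with $F\in\mathbb{R}^{n_f\times n}$, and $U=\{v\in\mathbb{R}^m: Gv\leq g\}$ bounded with $G\in\mathbb{R}^{n_g\times m}$; suppose $0\in\Omega$, $0\in X$, $0\in U$. Let $\bar G$, $\bar H$ be the matrices defined in the context, let $\hat g=(0,g,\dots,g,f,\dots,f)$ and $\tilde g=(h,0,\dots,0)$ (vectors of the same length as the number of rows of $\bar G$, partitioned like $\bar g$ in the context), let $\beta$ be the optimal value of the linear program $$\min_{\gamma\geq 0,\ T\geq 0,\ M}\ \gamma\quad\text{s.t.}\quad T\bar H=\bar G M,\quad Th\leq\gamma\hat g+\tilde g,\quad \begin{bmatrix}I&0&\cdots&0\end{bmatrix}=\begin{bmatrix}I&0&\cdots&0\end{bmatrix}M,$$ and let $\alpha=\beta^{-1}$. For $k\in\{1,\dots,N\}$ let $$\Omega_k^x=\Big\{x\in X:\ \exists\,u_1,\dots,u_k\in U \text{ with } A^kx+\sum_{i=0}^{k-1}A^{k-1-i}Bu_{k-i}\in\alpha\Omega,\ \ A^jx+\sum_{i=0}^{j-1}A^{j-1-i}Bu_{j-i}\in X\ \forall j\in\{1,\dots,k\}\Big\},$$ and $\bar\Omega^x=\mathrm{co}\big(\bigcup_{k=1}^N\Omega_k^x\big)$.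 Then $\bar\Omega^x$ equals the set of all $x\in\mathbb{R}^n$ for which there exist $z_1,\dots,z_N\in\mathbb{R}^n$, vectors $v_{k,i}\in\mathbb{R}^m$ ($k\in\{1,\dots,N\}$, $i\in\{1,\dots,k\}$) and $\lambda=(\lambda_1,\dots,\lambda_N)\in\mathbb{R}^N$ such that $x=\sum_{k=1}^N z_k$; $HA^kz_k+\sum_{i=0}^{k-1}HA^{k-1-i}Bv_{k,k-i}\leq\alpha\lambda_k h$ for all $k$; $FA^jz_k+\sum_{i=0}^{j-1}FA^{j-1-i}Bv_{k,j-i}\leq\lambda_k f$ for all $j\in\{1,\dots,k\}$ and all $k$; $Fz_k\leq\lambda_k f$ for all $k$; $Gv_{k,i}\leq\lambda_k g$ for all $i\in\{1,\dots,k\}$ and all $k$; $\lambda\geq0$ and $\sum_{k=1}^N\lambda_k=1$.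
   Context: Vector inequalities are componentwise; $T\geq0$ means entrywise nonnegative; $\mathrm{co}$ denotes convex hull. With $\bar n=n+Nm$, column blocks of widths $n,m,\dots,m$ (state block, then input blocks $i=1,\dots,N$): $\bar H=[H\ 0\ \cdots\ 0]\in\mathbb{R}^{n_h\times\bar n}$, and $\bar G$ has the block rows: $[HA^N\ \ HB\ \ HAB\ \cdots\ HA^{N-1}B]$; then for $i=1,\dots,N$ a block row with $G$ in input block $i$ and zeros elsewhere; then for $j=N,N-1,\dots,1$ a block row with $FA^j$ in the state block and $FA^{i-1-(N-j)}B$ in input block $i$ if $i\geq N-j+1$, $0$ otherwise; then the block row $[F\ 0\ \cdots\ 0]$. The vector $\bar g$ partitions accordingly as $(h,g,\dots,g,f,\dots,f)$ with $g$ repeated $N$ times and $f$ repeated $N+1$ times; $\hat g$ and $\tilde g$ use this partition. The matrix $\begin{bmatrix}I&0&\cdots&0\end{bmatrix}\in\mathbb{R}^{n\times\bar n}$ with $I$ the $n\times n$ identity; $M\in\mathbb{R}^{\bar n\times\bar n}$ and $T$ has as many rows as $\bar G$ and $n_h$ columns. It is implicitly assumed that $\beta>0$ so that $\alpha$ is defined. *)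

theory Defs
  imports "Jordan_Normal_Form.Matrix"
begin

definition vle :: "real vec \<Rightarrow> real vec \<Rightarrow> bool" where
  "vle u v \<longleftrightarrow> dim_vec u = dim_vec v \<and> (\<forall>i<dim_vec v. u $ i \<le> v $ i)"

definition mat_nonneg :: "real mat \<Rightarrow> bool" where
  "mat_nonneg T \<longleftrightarrow> (\<forall>i<dim_row T. \<forall>j<dim_col T. T $$ (i, j) \<ge> 0)"

definition vsum :: "nat \<Rightarrow> ('i \<Rightarrow> real vec) \<Rightarrow> 'i set \<Rightarrow> real vec" where
  "vsum n v I = vec n (\<lambda>r. \<Sum>i\<in>I. v i $ r)"

definition vbounded :: "real vec set \<Rightarrow> bool" where
  "vbounded S \<longleftrightarrow> (\<exists>R. \<forall>x\<in>S. \<forall>i<dim_vec x. \<bar>x $ i\<bar> \<le> R)"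

definition vconvex :: "real vec set \<Rightarrow> bool" where
  "vconvex S \<longleftrightarrow> (\<forall>x\<in>S. \<forall>y\<in>S. \<forall>u v. 0 \<le> u \<longrightarrow> 0 \<le> v \<longrightarrow> u + v = 1 \<longrightarrow>
      u \<cdot>\<^sub>v x + v \<cdot>\<^sub>v y \<in> S)"

definition polyh :: "real mat \<Rightarrow> real vec \<Rightarrow> real vec set" where
  "polyh P p = {x \<in> carrier_vec (dim_col P). vle (P *\<^sub>v x) p}"

definition hcat :: "real mat \<Rightarrow> real mat \<Rightarrow> real mat" where
  "hcat X Y = four_block_mat X Y (0\<^sub>m 0 (dim_col X)) (0\<^sub>m 0 (dim_col Y))"

definition vcat :: "real mat \<Rightarrow> real mat \<Rightarrow> real mat" where
  "vcat X Y = four_block_mat X (0\<^sub>m (dim_row X) 0) Y (0\<^sub>m (dim_row Y) 0)"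

definition hcat_list :: "nat \<Rightarrow> real mat list \<Rightarrow> real mat" where
  "hcat_list r Xs = foldr hcat Xs (0\<^sub>m r 0)"

definition vcat_list :: "nat \<Rightarrow> real mat list \<Rightarrow> real mat" where
  "vcat_list c Xs = foldr vcat Xs (0\<^sub>m 0 c)"

definition vconcat :: "real vec list \<Rightarrow> real vec" where
  "vconcat vs = foldr (@\<^sub>v) vs (0\<^sub>v 0)"

definition Gbar :: "real mat \<Rightarrow> real mat \<Rightarrow> real mat \<Rightarrow> real mat \<Rightarrow> real mat \<Rightarrow> nat \<Rightarrow> real mat" where
  "Gbar A B H F G N =
    (let n = dim_row A; m = dim_col B; nh = dim_row H; nf = dim_row F; ng = dim_row G;
         row0 = hcat_list nh (H * (A ^\<^sub>m N) # map (\<lambda>l. H * (A ^\<^sub>m (l - 1)) * B) [1..<N+1]);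
         growi = (\<lambda>i. hcat_list ng (0\<^sub>m ng n # map (\<lambda>l. if l = i then G else 0\<^sub>m ng m) [1..<N+1]));
         frowj = (\<lambda>j. hcat_list nf (F * (A ^\<^sub>m j) #
                    map (\<lambda>l. if l \<ge> N - j + 1 then F * (A ^\<^sub>m (l - 1 - (N - j))) * B else 0\<^sub>m nf m)
                      [1..<N+1]));
         flast = hcat_list nf (F # map (\<lambda>l. 0\<^sub>m nf m) [1..<N+1])
     in vcat_list (n + N * m) (row0 # map growi [1..<N+1] @ map frowj (rev [1..<N+1]) @ [flast]))"

definition Hbar :: "real mat \<Rightarrow> real mat \<Rightarrow> real mat \<Rightarrow> nat \<Rightarrow> real mat" where
  "Hbar A B H N = hcat_list (dim_row H) (H # map (\<lambda>l. 0\<^sub>m (dim_row H) (dim_col B)) [1..<N+1])"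

definition Ebar :: "real mat \<Rightarrow> real mat \<Rightarrow> nat \<Rightarrow> real mat" where
  "Ebar A B N = hcat_list (dim_row A) (1\<^sub>m (dim_row A) # map (\<lambda>l. 0\<^sub>m (dim_row A) (dim_col B)) [1..<N+1])"

definition ghat :: "real vec \<Rightarrow> real vec \<Rightarrow> real vec \<Rightarrow> nat \<Rightarrow> real vec" where
  "ghat h g f N = vconcat (0\<^sub>v (dim_vec h) # replicate N g @ replicate (N+1) f)"

definition gtilde :: "real vec \<Rightarrow> real vec \<Rightarrow> real vec \<Rightarrow> nat \<Rightarrow> real vec" where
  "gtilde h g f N = vconcat (h # replicate N (0\<^sub>v (dim_vec g)) @ replicate (N+1) (0\<^sub>v (dim_vec f)))"

definition lp_feasible :: "real mat \<Rightarrow> real mat \<Rightarrow> real mat \<Rightarrow> real vec \<Rightarrow> real mat \<Rightarrow> real vec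
    \<Rightarrow> real mat \<Rightarrow> real vec \<Rightarrow> nat \<Rightarrow> real set" where
  "lp_feasible A B H h F f G g N =
    {\<gamma>. \<gamma> \<ge> 0 \<and> (\<exists>T M.
        T \<in> carrier_mat (dim_row (Gbar A B H F G N)) (dim_row H) \<and> mat_nonneg T \<and>
        M \<in> carrier_mat (dim_row A + N * dim_col B) (dim_row A + N * dim_col B) \<and>
        T * Hbar A B H N = Gbar A B H F G N * M \<and>
        vle (T *\<^sub>v h) (\<gamma> \<cdot>\<^sub>v ghat h g f N + gtilde h g f N) \<and>
        Ebar A B N = Ebar A B N * M)}"

definition traj :: "real mat \<Rightarrow> real mat \<Rightarrow> real vec \<Rightarrow> (nat \<Rightarrow> real vec) \<Rightarrow> nat \<Rightarrow> real vec" where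
  "traj A B x u j = (A ^\<^sub>m j) *\<^sub>v x +
     vsum (dim_row A) (\<lambda>i. (A ^\<^sub>m (j - 1 - i)) *\<^sub>v (B *\<^sub>v u (j - i))) {0..<j}"

definition Omega_k :: "real mat \<Rightarrow> real mat \<Rightarrow> real mat \<Rightarrow> real vec \<Rightarrow> real mat \<Rightarrow> real vec
    \<Rightarrow> real mat \<Rightarrow> real vec \<Rightarrow> real \<Rightarrow> nat \<Rightarrow> real vec set" where
  "Omega_k A B H h F f G g \<alpha> k =
    {x \<in> polyh F f. \<exists>u. (\<forall>i\<in>{1..k}. u i \<in> polyh G g) \<and>
        traj A B x u k \<in> (\<lambda>w. \<alpha> \<cdot>\<^sub>v w) ` polyh H h \<and>
        (\<forall>j\<in>{1..k}. traj A B x u j \<in> polyh F f)}"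

end

theory Submission
  imports Defs
begin


lemma vsum_carrier[simp]: "vsum n v I \<in> carrier_vec n"
  by (simp add: vsum_def)
lemma vsum_dim[simp]: "dim_vec (vsum n v I) = n"
  by (simp add: vsum_def)
lemma vsum_index[simp]: "r < n \<Longrightarrow> vsum n v I $ r = (\<Sum>i\<in>I. v i $ r)"
  by (simp add: vsum_def)
lemma vsum_cong: "(\<And>i. i \<in> I \<Longrightarrow> v i = w i) \<Longrightarrow> vsum n v I = vsum n w I"
  unfolding vsum_def by (intro eq_vecI) auto

lemma mat_vec_zero[simp]: "M \<in> carrier_mat r c \<Longrightarrow> M *\<^sub>v 0\<^sub>v c = 0\<^sub>v r"
  by (intro eq_vecI) (auto simp: mult_mat_vec_def scalar_prod_def)

lemma mat_vec_lin:
  fixes M :: "real mat"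
  assumes "M \<in> carrier_mat r c" "x \<in> carrier_vec c" "y \<in> carrier_vec c"
  shows "M *\<^sub>v (a \<cdot>\<^sub>v x + b \<cdot>\<^sub>v y) = a \<cdot>\<^sub>v (M *\<^sub>v x) + b \<cdot>\<^sub>v (M *\<^sub>v y)"
  using assms by (simp add: mult_add_distrib_mat_vec[of M r c] mult_mat_vec[of M r c])

lemma mat_vec_vsum:
  fixes M :: "real mat"
  assumes M: "M \<in> carrier_mat r c" and v: "\<forall>i\<in>I. v i \<in> carrier_vec c" and fin: "finite I"
  shows "M *\<^sub>v vsum c v I = vsum r (\<lambda>i. M *\<^sub>v v i) I"
proof (rule eq_vecI)
  show "dim_vec (M *\<^sub>v vsum c v I) = dim_vec (vsum r (\<lambda>i. M *\<^sub>v v i) I)" using M by simp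
  fix k assume "k < dim_vec (vsum r (\<lambda>i. M *\<^sub>v v i) I)"
  hence k: "k < r" by simp
  have "(M *\<^sub>v vsum c v I) $ k = (\<Sum>j<c. M $$ (k, j) * (\<Sum>i\<in>I. v i $ j))"
    using M k by (simp add: mult_mat_vec_def scalar_prod_def lessThan_atLeast0)
  also have "\<dots> = (\<Sum>i\<in>I. \<Sum>j<c. M $$ (k, j) * v i $ j)"
    by (simp add: sum_distrib_left sum.swap[of _ I])
  also have "\<dots> = vsum r (\<lambda>i. M *\<^sub>v v i) I $ k"
    using M k v by (auto simp: mult_mat_vec_def scalar_prod_def lessThan_atLeast0 intro!: sum.cong)
  finally show "(M *\<^sub>v vsum c v I) $ k = vsum r (\<lambda>i. M *\<^sub>v v i) I $ k" .
qed


lemma pow_vec_carrier[simp]: "A \<in> carrier_mat n n \<Longrightarrow> A ^\<^sub>m k *\<^sub>v v \<in> carrier_vec n"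
  by (intro carrier_vecI) simp

lemma traj_carrier[simp]: "A \<in> carrier_mat n n \<Longrightarrow> traj A B x u j \<in> carrier_vec n"
  unfolding traj_def by (intro carrier_vecI) simp

lemma traj_lin:
  assumes A: "A \<in> carrier_mat n n" and B: "B \<in> carrier_mat n m"
    and x: "x \<in> carrier_vec n" and y: "y \<in> carrier_vec n"
    and u: "\<forall>i\<in>{1..j}. u i \<in> carrier_vec m" and w: "\<forall>i\<in>{1..j}. w i \<in> carrier_vec m"
  shows "traj A B (a \<cdot>\<^sub>v x + b \<cdot>\<^sub>v y) (\<lambda>i. a \<cdot>\<^sub>v u i + b \<cdot>\<^sub>v w i) j
     = a \<cdot>\<^sub>v traj A B x u j + b \<cdot>\<^sub>v traj A B y w j"
proof -
  have e1: "A ^\<^sub>m j *\<^sub>v (a \<cdot>\<^sub>v x + b \<cdot>\<^sub>v y) = a \<cdot>\<^sub>v (A ^\<^sub>m j *\<^sub>v x) + b \<cdot>\<^sub>v (A ^\<^sub>m j *\<^sub>v y)"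
    using A x y by (intro mat_vec_lin) auto
  have e2: "vsum n (\<lambda>i. A ^\<^sub>m (j - 1 - i) *\<^sub>v (B *\<^sub>v (a \<cdot>\<^sub>v u (j - i) + b \<cdot>\<^sub>v w (j - i)))) {0..<j}
     = vsum n (\<lambda>i. a \<cdot>\<^sub>v (A ^\<^sub>m (j - 1 - i) *\<^sub>v (B *\<^sub>v u (j - i))) + b \<cdot>\<^sub>v (A ^\<^sub>m (j - 1 - i) *\<^sub>v (B *\<^sub>v w (j - i)))) {0..<j}"
  proof (rule vsum_cong)
    fix i assume i: "i \<in> {0..<j}"
    hence ui: "u (j - i) \<in> carrier_vec m" and wi: "w (j - i) \<in> carrier_vec m" using u w by auto
    have "B *\<^sub>v (a \<cdot>\<^sub>v u (j - i) + b \<cdot>\<^sub>v w (j - i)) = a \<cdot>\<^sub>v (B *\<^sub>v u (j - i)) + b \<cdot>\<^sub>v (B *\<^sub>v w (j - i))"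
      using B ui wi by (rule mat_vec_lin)
    moreover have "A ^\<^sub>m (j - 1 - i) *\<^sub>v (a \<cdot>\<^sub>v (B *\<^sub>v u (j - i)) + b \<cdot>\<^sub>v (B *\<^sub>v w (j - i)))
       = a \<cdot>\<^sub>v (A ^\<^sub>m (j - 1 - i) *\<^sub>v (B *\<^sub>v u (j - i))) + b \<cdot>\<^sub>v (A ^\<^sub>m (j - 1 - i) *\<^sub>v (B *\<^sub>v w (j - i)))"
      using A B ui wi by (intro mat_vec_lin[of _ n n]) auto
    ultimately show "A ^\<^sub>m (j - 1 - i) *\<^sub>v (B *\<^sub>v (a \<cdot>\<^sub>v u (j - i) + b \<cdot>\<^sub>v w (j - i))) =
         a \<cdot>\<^sub>v (A ^\<^sub>m (j - 1 - i) *\<^sub>v (B *\<^sub>v u (j - i))) + b \<cdot>\<^sub>v (A ^\<^sub>m (j - 1 - i) *\<^sub>v (B *\<^sub>v w (j - i)))" by simp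
  qed
  have "traj A B (a \<cdot>\<^sub>v x + b \<cdot>\<^sub>v y) (\<lambda>i. a \<cdot>\<^sub>v u i + b \<cdot>\<^sub>v w i) j =
     (a \<cdot>\<^sub>v (A ^\<^sub>m j *\<^sub>v x) + b \<cdot>\<^sub>v (A ^\<^sub>m j *\<^sub>v y)) + vsum n (\<lambda>i. a \<cdot>\<^sub>v (A ^\<^sub>m (j - 1 - i) *\<^sub>v (B *\<^sub>v u (j - i))) + b \<cdot>\<^sub>v (A ^\<^sub>m (j - 1 - i) *\<^sub>v (B *\<^sub>v w (j - i)))) {0..<j}"
    unfolding traj_def e1[symmetric] e2[symmetric] using A by simp
  also have "\<dots> = a \<cdot>\<^sub>v traj A B x u j + b \<cdot>\<^sub>v traj A B y w j"
    unfolding traj_def using A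
    by (intro eq_vecI) (simp_all add: sum.distrib sum_distrib_left distrib_left)
  finally show ?thesis .
qed

lemma traj_scale:
  assumes A: "A \<in> carrier_mat n n" and B: "B \<in> carrier_mat n m"
    and x: "x \<in> carrier_vec n" and u: "\<forall>i\<in>{1..j}. u i \<in> carrier_vec m"
  shows "traj A B (c \<cdot>\<^sub>v x) (\<lambda>i. c \<cdot>\<^sub>v u i) j = c \<cdot>\<^sub>v traj A B x u j"
proof -
  have "traj A B (c \<cdot>\<^sub>v x + 0 \<cdot>\<^sub>v x) (\<lambda>i. c \<cdot>\<^sub>v u i + 0 \<cdot>\<^sub>v u i) j
     = c \<cdot>\<^sub>v traj A B x u j + 0 \<cdot>\<^sub>v traj A B x u j"
    by (rule traj_lin[OF A B x x u u])
  moreover have "c \<cdot>\<^sub>v x + 0 \<cdot>\<^sub>v x = c \<cdot>\<^sub>v x" using x by (intro eq_vecI) auto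
  moreover have "(\<lambda>i. c \<cdot>\<^sub>v u i + 0 \<cdot>\<^sub>v u i) = (\<lambda>i. c \<cdot>\<^sub>v u i)" by (intro ext eq_vecI) auto
  moreover have "c \<cdot>\<^sub>v traj A B x u j + 0 \<cdot>\<^sub>v traj A B x u j = c \<cdot>\<^sub>v traj A B x u j"
    using A by (intro eq_vecI) auto
  ultimately show ?thesis by simp
qed

lemma traj_zero_u:
  assumes A: "A \<in> carrier_mat n n" and B: "B \<in> carrier_mat n m"
    and x: "x \<in> carrier_vec n" and u: "\<forall>i\<in>{1..j}. u i = 0\<^sub>v m"
  shows "traj A B x u j = A ^\<^sub>m j *\<^sub>v x"
proof -
  have "vsum n (\<lambda>i. A ^\<^sub>m (j - 1 - i) *\<^sub>v (B *\<^sub>v u (j - i))) {0..<j} = vsum n (\<lambda>i. 0\<^sub>v n) {0..<j}"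
    using A B u by (intro vsum_cong) auto
  thus ?thesis unfolding traj_def using A by (intro eq_vecI) auto
qed

lemma H_traj:
  fixes H :: "real mat"
  assumes A: "A \<in> carrier_mat n n" and B: "B \<in> carrier_mat n m" and H: "H \<in> carrier_mat r n"
    and x: "x \<in> carrier_vec n" and u: "\<forall>i\<in>{1..j}. u i \<in> carrier_vec m"
  shows "H *\<^sub>v traj A B x u j = H *\<^sub>v (A ^\<^sub>m j *\<^sub>v x) +
     vsum r (\<lambda>i. H *\<^sub>v (A ^\<^sub>m (j - 1 - i) *\<^sub>v (B *\<^sub>v u (j - i)))) {0..<j}"
proof -
  have "H *\<^sub>v vsum n (\<lambda>i. A ^\<^sub>m (j - 1 - i) *\<^sub>v (B *\<^sub>v u (j - i))) {0..<j}
     = vsum r (\<lambda>i. H *\<^sub>v (A ^\<^sub>m (j - 1 - i) *\<^sub>v (B *\<^sub>v u (j - i)))) {0..<j}"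
    using A B H by (intro mat_vec_vsum) auto
  moreover have "H *\<^sub>v traj A B x u j = H *\<^sub>v (A ^\<^sub>m j *\<^sub>v x) +
     H *\<^sub>v vsum n (\<lambda>i. A ^\<^sub>m (j - 1 - i) *\<^sub>v (B *\<^sub>v u (j - i))) {0..<j}"
    unfolding traj_def using A H x by (simp add: carrier_matD(1)[OF A]) (intro mult_add_distrib_mat_vec[of H r n], auto)
  ultimately show ?thesis by simp
qed


lemma vle_comb:
  assumes "vle p q" "vle p' q'" "dim_vec q = dim_vec q'" "(a::real) \<ge> 0" "b \<ge> 0"
  shows "vle (a \<cdot>\<^sub>v p + b \<cdot>\<^sub>v p') (a \<cdot>\<^sub>v q + b \<cdot>\<^sub>v q')"
  using assms unfolding vle_def
  by (auto intro!: add_mono mult_left_mono)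

lemma vle_scale:
  assumes "vle p q" "(c::real) \<ge> 0"
  shows "vle (c \<cdot>\<^sub>v p) (c \<cdot>\<^sub>v q)"
  using assms unfolding vle_def by (auto intro!: mult_left_mono)

lemma vle_eq1: "vle p q \<Longrightarrow> p = p' \<Longrightarrow> q = q' \<Longrightarrow> vle p' q'" by simp

lemma bounded_rec:
  fixes P :: "real mat"
  assumes P: "P \<in> carrier_mat r c" and bd: "vbounded (polyh P p)" and z: "0\<^sub>v c \<in> polyh P p"
    and y: "y \<in> carrier_vec c" and le: "vle (P *\<^sub>v y) (0 \<cdot>\<^sub>v p)"
  shows "y = 0\<^sub>v c"
proof -
  have dp: "dim_vec p = r" and pnn: "\<And>i. i < r \<Longrightarrow> p $ i \<ge> 0"
    using z P unfolding polyh_def vle_def by auto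
  have Py: "\<And>i. i < r \<Longrightarrow> (P *\<^sub>v y) $ i \<le> 0" using le dp unfolding vle_def by auto
  have mem: "t \<cdot>\<^sub>v y \<in> polyh P p" if t: "t \<ge> 0" for t
  proof -
    have "P *\<^sub>v (t \<cdot>\<^sub>v y) = t \<cdot>\<^sub>v (P *\<^sub>v y)" using P y by (rule mult_mat_vec)
    moreover have "t * (P *\<^sub>v y) $ i \<le> p $ i" if "i < r" for i
      using Py[OF that] pnn[OF that] t by (meson mult_nonneg_nonpos order_trans)
    ultimately show ?thesis using P y dp unfolding polyh_def vle_def by auto
  qed
  obtain R where R: "\<forall>x\<in>polyh P p. \<forall>i<dim_vec x. \<bar>x $ i\<bar> \<le> R" using bd unfolding vbounded_def by auto
  show ?thesis
  proof (rule eq_vecI)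
    show "dim_vec y = dim_vec (0\<^sub>v c)" using y by simp
    fix i assume "i < dim_vec (0\<^sub>v c)"
    hence i: "i < c" by simp
    show "y $ i = 0\<^sub>v c $ i"
    proof (rule ccontr)
      assume "y $ i \<noteq> 0\<^sub>v c $ i"
      hence nz: "y $ i \<noteq> 0" using i by simp
      define t where "t = (\<bar>R\<bar> + 1) / \<bar>y $ i\<bar>"
      have t0: "t \<ge> 0" unfolding t_def by simp
      have "\<bar>(t \<cdot>\<^sub>v y) $ i\<bar> \<le> R" using R mem[OF t0] i y by auto
      moreover have "\<bar>(t \<cdot>\<^sub>v y) $ i\<bar> = \<bar>R\<bar> + 1"
        using i y nz unfolding t_def by (simp add: abs_mult)
      ultimately show False by simp
    qed
  qed
qed

lemma inj_pow:
  fixes A :: "real mat"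
  assumes A: "A \<in> carrier_mat n n" and Ainv: "invertible_mat A"
  shows "z \<in> carrier_vec n \<Longrightarrow> A ^\<^sub>m k *\<^sub>v z = 0\<^sub>v n \<Longrightarrow> z = 0\<^sub>v n"
proof (induction k arbitrary: z)
  case 0
  then show ?case using A by simp
next
  case (Suc k)
  obtain P where PA: "inverts_mat P A" and AP: "inverts_mat A P"
    using Ainv unfolding invertible_mat_def by blast
  have P: "P \<in> carrier_mat n n" using PA AP A unfolding inverts_mat_def
    by (metis carrier_matD(1) carrier_matD(2) carrier_mat_triv index_mult_mat(3) index_one_mat(3))
  have PA1: "P * A = 1\<^sub>m n" using PA P unfolding inverts_mat_def by simp
  have "A ^\<^sub>m Suc k *\<^sub>v z = (A ^\<^sub>m k * A) *\<^sub>v z" by simp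
  also have "\<dots> = A ^\<^sub>m k *\<^sub>v (A *\<^sub>v z)" by (rule assoc_mult_mat_vec[OF pow_carrier_mat[OF A] A Suc.prems(1)])
  finally have e: "A ^\<^sub>m Suc k *\<^sub>v z = A ^\<^sub>m k *\<^sub>v (A *\<^sub>v z)" .
  have e2: "A ^\<^sub>m k *\<^sub>v (A *\<^sub>v z) = 0\<^sub>v n" using Suc.prems(2) unfolding e .
  have "A *\<^sub>v z \<in> carrier_vec n" using A Suc.prems(1) by simp
  hence "A *\<^sub>v z = 0\<^sub>v n" using e2 by (rule Suc.IH)
  hence "P *\<^sub>v (A *\<^sub>v z) = 0\<^sub>v n" using P by simp
  moreover have "P *\<^sub>v (A *\<^sub>v z) = z" using P A Suc.prems PA1
    by (metis assoc_mult_mat_vec one_mult_mat_vec)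
  ultimately show ?case by simp
qed

lemma conv_comb:
  assumes fin: "finite K" and ne: "K \<noteq> {}" and cv: "vconvex S"
    and y: "\<forall>k\<in>K. y k \<in> S \<and> y k \<in> carrier_vec n"
    and l0: "\<forall>k\<in>K. lam k \<ge> (0::real)" and l1: "sum lam K = 1"
  shows "vsum n (\<lambda>k. lam k \<cdot>\<^sub>v y k) K \<in> S"
  using fin ne y l0 l1
proof (induction K arbitrary: lam rule: finite_ne_induct)
  case (singleton a)
  have "vsum n (\<lambda>k. lam k \<cdot>\<^sub>v y k) {a} = y a"
    using singleton by (intro eq_vecI) auto
  then show ?case using singleton by simp
next
  case (insert a K)
  define t where "t = sum lam K"
  have t0: "t \<ge> 0" unfolding t_def using insert by (simp add: sum_nonneg)
  have la: "lam a + t = 1" using insert unfolding t_def by simp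
  show ?case
  proof (cases "t = 0")
    case True
    hence z: "\<forall>k\<in>K. lam k = 0" using insert unfolding t_def
      by (simp add: sum_nonneg_eq_0_iff)
    have "vsum n (\<lambda>k. lam k \<cdot>\<^sub>v y k) (insert a K) = y a"
    proof (rule eq_vecI)
      show "dim_vec (vsum n (\<lambda>k. lam k \<cdot>\<^sub>v y k) (insert a K)) = dim_vec (y a)" using insert by auto
      fix i assume "i < dim_vec (y a)"
      hence i: "i < n" using insert by auto
      have "(\<Sum>k\<in>K. (lam k \<cdot>\<^sub>v y k) $ i) = 0"
      proof (rule sum.neutral, rule ballI)
        fix k assume k: "k \<in> K"
        hence "dim_vec (y k) = n" using insert by auto
        thus "(lam k \<cdot>\<^sub>v y k) $ i = 0" using z k i by simp
      qed
      thus "vsum n (\<lambda>k. lam k \<cdot>\<^sub>v y k) (insert a K) $ i = y a $ i" using i insert la True by simp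
    qed
    then show ?thesis using insert by simp
  next
    case False
    hence tp: "t > 0" using t0 by simp
    have "sum (\<lambda>k. lam k / t) K = 1" using tp unfolding t_def by (simp add: sum_divide_distrib[symmetric])
    hence p: "vsum n (\<lambda>k. (lam k / t) \<cdot>\<^sub>v y k) K \<in> S"
      using insert tp by (intro insert.IH) auto
    have "lam a \<cdot>\<^sub>v y a + t \<cdot>\<^sub>v vsum n (\<lambda>k. (lam k / t) \<cdot>\<^sub>v y k) K \<in> S"
      using cv p insert la t0 unfolding vconvex_def by auto
    moreover have "lam a \<cdot>\<^sub>v y a + t \<cdot>\<^sub>v vsum n (\<lambda>k. (lam k / t) \<cdot>\<^sub>v y k) K
       = vsum n (\<lambda>k. lam k \<cdot>\<^sub>v y k) (insert a K)"
    proof (rule eq_vecI)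
      show "dim_vec (lam a \<cdot>\<^sub>v y a + t \<cdot>\<^sub>v vsum n (\<lambda>k. (lam k / t) \<cdot>\<^sub>v y k) K) = dim_vec (vsum n (\<lambda>k. lam k \<cdot>\<^sub>v y k) (insert a K))" by simp
      fix i assume "i < dim_vec (vsum n (\<lambda>k. lam k \<cdot>\<^sub>v y k) (insert a K))"
      hence i: "i < n" by simp
      have "t * (\<Sum>k\<in>K. ((lam k / t) \<cdot>\<^sub>v y k) $ i) = (\<Sum>k\<in>K. (lam k \<cdot>\<^sub>v y k) $ i)"
        unfolding sum_distrib_left
      proof (rule sum.cong[OF refl])
        fix k assume k: "k \<in> K"
        hence "dim_vec (y k) = n" using insert by auto
        thus "t * ((lam k / t) \<cdot>\<^sub>v y k) $ i = (lam k \<cdot>\<^sub>v y k) $ i" using i tp by simp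
      qed
      moreover have "dim_vec (y a) = n" using insert by auto
      ultimately show "(lam a \<cdot>\<^sub>v y a + t \<cdot>\<^sub>v vsum n (\<lambda>k. (lam k / t) \<cdot>\<^sub>v y k) K) $ i = vsum n (\<lambda>k. lam k \<cdot>\<^sub>v y k) (insert a K) $ i"
        using i insert by simp
    qed
    ultimately show ?thesis by simp
  qed
qed


lemma scale_ineq:
  fixes M :: "real mat"
  assumes M: "M \<in> carrier_mat r n" and p: "p \<in> carrier_vec n" and q: "q \<in> carrier_vec r"
    and le: "vle (M *\<^sub>v p) (l \<cdot>\<^sub>v q)" and l: "l > 0"
  shows "vle (M *\<^sub>v ((1 / l) \<cdot>\<^sub>v p)) q"
proof -
  have "vle ((1 / l) \<cdot>\<^sub>v (M *\<^sub>v p)) ((1 / l) \<cdot>\<^sub>v (l \<cdot>\<^sub>v q))" using le l by (intro vle_scale) auto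
  moreover have "(1 / l) \<cdot>\<^sub>v (M *\<^sub>v p) = M *\<^sub>v ((1 / l) \<cdot>\<^sub>v p)" using M p by (simp add: mult_mat_vec)
  moreover have "(1 / l) \<cdot>\<^sub>v (l \<cdot>\<^sub>v q) = q" using q l by (intro eq_vecI) auto
  ultimately show ?thesis by simp
qed

lemma comb_ineq:
  fixes M :: "real mat"
  assumes M: "M \<in> carrier_mat r n" and p: "p \<in> carrier_vec n" and p': "p' \<in> carrier_vec n"
    and q: "q \<in> carrier_vec r"
    and le: "vle (M *\<^sub>v p) (c \<cdot>\<^sub>v q)" and le': "vle (M *\<^sub>v p') (c' \<cdot>\<^sub>v q)"
    and a: "a \<ge> 0" and b: "b \<ge> 0" and cc: "d = a * c + b * c'"
  shows "vle (M *\<^sub>v (a \<cdot>\<^sub>v p + b \<cdot>\<^sub>v p')) (d \<cdot>\<^sub>v q)"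
proof -
  have "vle (a \<cdot>\<^sub>v (M *\<^sub>v p) + b \<cdot>\<^sub>v (M *\<^sub>v p')) (a \<cdot>\<^sub>v (c \<cdot>\<^sub>v q) + b \<cdot>\<^sub>v (c' \<cdot>\<^sub>v q))"
    using le le' a b by (intro vle_comb) auto
  moreover have "a \<cdot>\<^sub>v (M *\<^sub>v p) + b \<cdot>\<^sub>v (M *\<^sub>v p') = M *\<^sub>v (a \<cdot>\<^sub>v p + b \<cdot>\<^sub>v p')"
    using M p p' by (simp add: mat_vec_lin)
  moreover have "a \<cdot>\<^sub>v (c \<cdot>\<^sub>v q) + b \<cdot>\<^sub>v (c' \<cdot>\<^sub>v q) = d \<cdot>\<^sub>v q"
    using q cc by (intro eq_vecI) (auto simp: algebra_simps)
  ultimately show ?thesis by simp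
qed

lemma sum_delta_vec:
  assumes "finite I" "k0 \<in> I" "x \<in> carrier_vec n" "r < n"
  shows "(\<Sum>k\<in>I. (if k = k0 then x else 0\<^sub>v n) $ r) = x $ r"
proof -
  have "(\<Sum>k\<in>I. (if k = k0 then x else 0\<^sub>v n) $ r) = (\<Sum>k\<in>I. if k = k0 then x $ r else 0)"
    using assms by (intro sum.cong) auto
  also have "\<dots> = x $ r" using assms by simp
  finally show ?thesis .
qed


lemma index_comb[simp]: "x \<in> carrier_vec n \<Longrightarrow> y \<in> carrier_vec n \<Longrightarrow> r < n \<Longrightarrow>
  (a \<cdot>\<^sub>v x + b \<cdot>\<^sub>v y) $ r = a * x $ r + b * y $ r"
  by (simp add: carrier_vecD)


lemma vle_zero: "q \<in> carrier_vec r \<Longrightarrow> c = 0 \<Longrightarrow> vle (0\<^sub>v r) (c \<cdot>\<^sub>v q)"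
  by (simp add: vle_def)



lemma main:
  fixes A B H F G :: "real mat" and h f g :: "real vec" and n m nh nf ng N :: nat
    and \<beta> \<alpha> :: real
  assumes A: "A \<in> carrier_mat n n" and Ainv: "invertible_mat A"
    and B: "B \<in> carrier_mat n m" and N: "N \<ge> 1"
    and H: "H \<in> carrier_mat nh n" and h: "h \<in> carrier_vec nh"
    and F: "F \<in> carrier_mat nf n" and f: "f \<in> carrier_vec nf"
    and G: "G \<in> carrier_mat ng m" and g: "g \<in> carrier_vec ng"
    and Omega_bdd: "vbounded (polyh H h)" and U_bdd: "vbounded (polyh G g)"
    and zO: "0\<^sub>v n \<in> polyh H h" and zX: "0\<^sub>v n \<in> polyh F f" and zU: "0\<^sub>v m \<in> polyh G g"
    and beta: "\<beta> \<in> lp_feasible A B H h F f G g N" and beta_min: "\<forall>\<gamma>\<in>lp_feasible A B H h F f G g N. \<beta> \<le> \<gamma>" and beta_pos: "\<beta> > 0"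
    and alpha: "\<alpha> = inverse \<beta>"
  shows "vconvex hull (\<Union>k\<in>{1..N}. Omega_k A B H h F f G g \<alpha> k) =
    {x \<in> carrier_vec n. \<exists>z v lam.
        (\<forall>k\<in>{1..N}. z k \<in> carrier_vec n) \<and>
        (\<forall>k\<in>{1..N}. \<forall>i\<in>{1..k}. v k i \<in> carrier_vec m) \<and>
        x = vsum n z {1..N} \<and>
        (\<forall>k\<in>{1..N}. vle (H *\<^sub>v ((A ^\<^sub>m k) *\<^sub>v z k) +
             vsum nh (\<lambda>i. H *\<^sub>v ((A ^\<^sub>m (k - 1 - i)) *\<^sub>v (B *\<^sub>v v k (k - i)))) {0..<k})
           ((\<alpha> * lam k) \<cdot>\<^sub>v h)) \<and>
        (\<forall>k\<in>{1..N}. \<forall>j\<in>{1..k}. vle (F *\<^sub>v ((A ^\<^sub>m j) *\<^sub>v z k) +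
             vsum nf (\<lambda>i. F *\<^sub>v ((A ^\<^sub>m (j - 1 - i)) *\<^sub>v (B *\<^sub>v v k (j - i)))) {0..<j})
           (lam k \<cdot>\<^sub>v f)) \<and>
        (\<forall>k\<in>{1..N}. vle (F *\<^sub>v z k) (lam k \<cdot>\<^sub>v f)) \<and>
        (\<forall>k\<in>{1..N}. \<forall>i\<in>{1..k}. vle (G *\<^sub>v v k i) (lam k \<cdot>\<^sub>v g)) \<and>
        (\<forall>k\<in>{1..N}. lam k \<ge> 0) \<and> (\<Sum>k\<in>{1..N}. lam k) = 1}" (is "?L = ?R")
proof -
  have alpha_pos: "\<alpha> > 0" using alpha beta_pos by simp
  let ?U = "(\<Union>k\<in>{1..N}. Omega_k A B H h F f G g \<alpha> k)"
  have Htr: "\<And>M r x u j X. M \<in> carrier_mat r n \<Longrightarrow> x \<in> carrier_vec n \<Longrightarrow> \<forall>i\<in>{1..j}. u i \<in> carrier_vec m \<Longrightarrow>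
     vle (M *\<^sub>v (A ^\<^sub>m j *\<^sub>v x) + vsum r (\<lambda>i. M *\<^sub>v (A ^\<^sub>m (j - 1 - i) *\<^sub>v (B *\<^sub>v u (j - i)))) {0..<j}) X
     = vle (M *\<^sub>v traj A B x u j) X"
    using H_traj[OF A B] by simp
  have R_conv: "vconvex ?R"
    unfolding vconvex_def
  proof (intro ballI allI impI)
    fix x y and a b :: real
    assume x: "x \<in> ?R" and y: "y \<in> ?R" and a: "0 \<le> a" and b: "0 \<le> b" and ab: "a + b = 1"
    from x obtain z v lam where xc: "x \<in> carrier_vec n" and zc: "\<forall>k\<in>{1..N}. z k \<in> carrier_vec n"
      and vc: "\<forall>k\<in>{1..N}. \<forall>i\<in>{1..k}. v k i \<in> carrier_vec m" and xs: "x = vsum n z {1..N}"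
      and hc: "\<forall>k\<in>{1..N}. vle (H *\<^sub>v ((A ^\<^sub>m k) *\<^sub>v z k) +
             vsum nh (\<lambda>i. H *\<^sub>v ((A ^\<^sub>m (k - 1 - i)) *\<^sub>v (B *\<^sub>v v k (k - i)))) {0..<k})
           ((\<alpha> * lam k) \<cdot>\<^sub>v h)"
      and fc: "\<forall>k\<in>{1..N}. \<forall>j\<in>{1..k}. vle (F *\<^sub>v ((A ^\<^sub>m j) *\<^sub>v z k) +
             vsum nf (\<lambda>i. F *\<^sub>v ((A ^\<^sub>m (j - 1 - i)) *\<^sub>v (B *\<^sub>v v k (j - i)))) {0..<j})
           (lam k \<cdot>\<^sub>v f)"
      and f0: "\<forall>k\<in>{1..N}. vle (F *\<^sub>v z k) (lam k \<cdot>\<^sub>v f)"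
      and gc: "\<forall>k\<in>{1..N}. \<forall>i\<in>{1..k}. vle (G *\<^sub>v v k i) (lam k \<cdot>\<^sub>v g)"
      and l0: "\<forall>k\<in>{1..N}. lam k \<ge> 0" and l1: "(\<Sum>k\<in>{1..N}. lam k) = 1"
      by blast
    from y obtain z' v' lam' where yc: "y \<in> carrier_vec n" and zc': "\<forall>k\<in>{1..N}. z' k \<in> carrier_vec n"
      and vc': "\<forall>k\<in>{1..N}. \<forall>i\<in>{1..k}. v' k i \<in> carrier_vec m" and ys: "y = vsum n z' {1..N}"
      and hc': "\<forall>k\<in>{1..N}. vle (H *\<^sub>v ((A ^\<^sub>m k) *\<^sub>v z' k) +
             vsum nh (\<lambda>i. H *\<^sub>v ((A ^\<^sub>m (k - 1 - i)) *\<^sub>v (B *\<^sub>v v' k (k - i)))) {0..<k})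
           ((\<alpha> * lam' k) \<cdot>\<^sub>v h)"
      and fc': "\<forall>k\<in>{1..N}. \<forall>j\<in>{1..k}. vle (F *\<^sub>v ((A ^\<^sub>m j) *\<^sub>v z' k) +
             vsum nf (\<lambda>i. F *\<^sub>v ((A ^\<^sub>m (j - 1 - i)) *\<^sub>v (B *\<^sub>v v' k (j - i)))) {0..<j})
           (lam' k \<cdot>\<^sub>v f)"
      and f0': "\<forall>k\<in>{1..N}. vle (F *\<^sub>v z' k) (lam' k \<cdot>\<^sub>v f)"
      and gc': "\<forall>k\<in>{1..N}. \<forall>i\<in>{1..k}. vle (G *\<^sub>v v' k i) (lam' k \<cdot>\<^sub>v g)"
      and l0': "\<forall>k\<in>{1..N}. lam' k \<ge> 0" and l1': "(\<Sum>k\<in>{1..N}. lam' k) = 1"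
      by blast
    define Z where "Z = (\<lambda>k. a \<cdot>\<^sub>v z k + b \<cdot>\<^sub>v z' k)"
    define V where "V = (\<lambda>k i. a \<cdot>\<^sub>v v k i + b \<cdot>\<^sub>v v' k i)"
    define L where "L = (\<lambda>k. a * lam k + b * lam' k)"
    have c0: "a \<cdot>\<^sub>v x + b \<cdot>\<^sub>v y \<in> carrier_vec n" using xc yc by simp
    have c1: "\<forall>k\<in>{1..N}. Z k \<in> carrier_vec n" using zc zc' unfolding Z_def by auto
    have c2: "\<forall>k\<in>{1..N}. \<forall>i\<in>{1..k}. V k i \<in> carrier_vec m" using vc vc' unfolding V_def by auto
    have c3: "a \<cdot>\<^sub>v x + b \<cdot>\<^sub>v y = vsum n Z {1..N}"
    proof (rule eq_vecI)
      show "dim_vec (a \<cdot>\<^sub>v x + b \<cdot>\<^sub>v y) = dim_vec (vsum n Z {1..N})" using yc by simp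
      fix r assume "r < dim_vec (vsum n Z {1..N})"
      hence r: "r < n" by simp
      have "(a \<cdot>\<^sub>v x + b \<cdot>\<^sub>v y) $ r = a * x $ r + b * y $ r" using xc yc r by simp
      also have "\<dots> = a * (\<Sum>k\<in>{1..N}. z k $ r) + b * (\<Sum>k\<in>{1..N}. z' k $ r)"
        using r by (simp add: xs ys)
      also have "\<dots> = (\<Sum>k\<in>{1..N}. Z k $ r)"
        unfolding Z_def sum_distrib_left sum.distrib[symmetric] using zc zc' r by (intro sum.cong refl index_comb[symmetric]) auto
      finally show "(a \<cdot>\<^sub>v x + b \<cdot>\<^sub>v y) $ r = vsum n Z {1..N} $ r" using r by simp
    qed
    have c4: "\<forall>k\<in>{1..N}. vle (H *\<^sub>v ((A ^\<^sub>m k) *\<^sub>v Z k) +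
             vsum nh (\<lambda>i. H *\<^sub>v ((A ^\<^sub>m (k - 1 - i)) *\<^sub>v (B *\<^sub>v V k (k - i)))) {0..<k})
           ((\<alpha> * L k) \<cdot>\<^sub>v h)"
    proof
      fix k assume k: "k \<in> {1..N}"
      have zk: "z k \<in> carrier_vec n" "z' k \<in> carrier_vec n" "Z k \<in> carrier_vec n" using zc zc' c1 k by auto
      have vk: "\<forall>i\<in>{1..k}. v k i \<in> carrier_vec m" "\<forall>i\<in>{1..k}. v' k i \<in> carrier_vec m"
        "\<forall>i\<in>{1..k}. V k i \<in> carrier_vec m" using vc vc' c2 k by auto
      have e: "traj A B (Z k) (V k) k = a \<cdot>\<^sub>v traj A B (z k) (v k) k + b \<cdot>\<^sub>v traj A B (z' k) (v' k) k"
        unfolding Z_def V_def by (rule traj_lin[OF A B zk(1,2) vk(1,2)])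
      have h1: "vle (H *\<^sub>v traj A B (z k) (v k) k) ((\<alpha> * lam k) \<cdot>\<^sub>v h)"
        using hc[rule_format, OF k] unfolding Htr[OF H zk(1) vk(1)] .
      have h2: "vle (H *\<^sub>v traj A B (z' k) (v' k) k) ((\<alpha> * lam' k) \<cdot>\<^sub>v h)"
        using hc'[rule_format, OF k] unfolding Htr[OF H zk(2) vk(2)] .
      have "vle (H *\<^sub>v traj A B (Z k) (V k) k) ((\<alpha> * L k) \<cdot>\<^sub>v h)"
        unfolding e by (rule comb_ineq[OF H traj_carrier[OF A] traj_carrier[OF A] h h1 h2 a b])
          (simp add: L_def algebra_simps)
      thus "vle (H *\<^sub>v ((A ^\<^sub>m k) *\<^sub>v Z k) +
             vsum nh (\<lambda>i. H *\<^sub>v ((A ^\<^sub>m (k - 1 - i)) *\<^sub>v (B *\<^sub>v V k (k - i)))) {0..<k})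
           ((\<alpha> * L k) \<cdot>\<^sub>v h)" using Htr[OF H zk(3) vk(3)] by simp
    qed
    have c5: "\<forall>k\<in>{1..N}. \<forall>j\<in>{1..k}. vle (F *\<^sub>v ((A ^\<^sub>m j) *\<^sub>v Z k) +
             vsum nf (\<lambda>i. F *\<^sub>v ((A ^\<^sub>m (j - 1 - i)) *\<^sub>v (B *\<^sub>v V k (j - i)))) {0..<j})
           (L k \<cdot>\<^sub>v f)"
    proof (intro ballI)
      fix k j assume k: "k \<in> {1..N}" and j: "j \<in> {1..k}"
      have zk: "z k \<in> carrier_vec n" "z' k \<in> carrier_vec n" "Z k \<in> carrier_vec n" using zc zc' c1 k by auto
      have vk: "\<forall>i\<in>{1..j}. v k i \<in> carrier_vec m" "\<forall>i\<in>{1..j}. v' k i \<in> carrier_vec m"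
        "\<forall>i\<in>{1..j}. V k i \<in> carrier_vec m" using vc vc' c2 k j by auto
      have e: "traj A B (Z k) (V k) j = a \<cdot>\<^sub>v traj A B (z k) (v k) j + b \<cdot>\<^sub>v traj A B (z' k) (v' k) j"
        unfolding Z_def V_def by (rule traj_lin[OF A B zk(1,2) vk(1,2)])
      have h1: "vle (F *\<^sub>v traj A B (z k) (v k) j) (lam k \<cdot>\<^sub>v f)"
        using fc[rule_format, OF k j] unfolding Htr[OF F zk(1) vk(1)] .
      have h2: "vle (F *\<^sub>v traj A B (z' k) (v' k) j) (lam' k \<cdot>\<^sub>v f)"
        using fc'[rule_format, OF k j] unfolding Htr[OF F zk(2) vk(2)] .
      have "vle (F *\<^sub>v traj A B (Z k) (V k) j) (L k \<cdot>\<^sub>v f)"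
        unfolding e by (rule comb_ineq[OF F traj_carrier[OF A] traj_carrier[OF A] f h1 h2 a b])
          (simp add: L_def algebra_simps)
      thus "vle (F *\<^sub>v ((A ^\<^sub>m j) *\<^sub>v Z k) +
             vsum nf (\<lambda>i. F *\<^sub>v ((A ^\<^sub>m (j - 1 - i)) *\<^sub>v (B *\<^sub>v V k (j - i)))) {0..<j})
           (L k \<cdot>\<^sub>v f)" using Htr[OF F zk(3) vk(3)] by simp
    qed
    have c6: "\<forall>k\<in>{1..N}. vle (F *\<^sub>v Z k) (L k \<cdot>\<^sub>v f)"
    proof
      fix k assume k: "k \<in> {1..N}"
      show "vle (F *\<^sub>v Z k) (L k \<cdot>\<^sub>v f)" unfolding Z_def
        by (rule comb_ineq[OF F _ _ f _ _ a b]) (use zc zc' f0 f0' k in \<open>auto simp: L_def\<close>)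
    qed
    have c7: "\<forall>k\<in>{1..N}. \<forall>i\<in>{1..k}. vle (G *\<^sub>v V k i) (L k \<cdot>\<^sub>v g)"
    proof (intro ballI)
      fix k i assume k: "k \<in> {1..N}" and i: "i \<in> {1..k}"
      show "vle (G *\<^sub>v V k i) (L k \<cdot>\<^sub>v g)" unfolding V_def
        by (rule comb_ineq[OF G _ _ g _ _ a b]) (use vc vc' gc gc' k i in \<open>auto simp: L_def\<close>)
    qed
    have c8: "\<forall>k\<in>{1..N}. L k \<ge> 0" using l0 l0' a b unfolding L_def by auto
    have c9: "(\<Sum>k\<in>{1..N}. L k) = 1" using l1 l1' ab unfolding L_def
      by (simp add: sum.distrib sum_distrib_left[symmetric])
    show "a \<cdot>\<^sub>v x + b \<cdot>\<^sub>v y \<in> ?R"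
      unfolding mem_Collect_eq
      by (intro conjI exI[of _ Z] exI[of _ V] exI[of _ L] c0 c1 c2 c3 c4 c5 c6 c7 c8 c9)
  qed
  have U_R: "?U \<subseteq> ?R"
  proof
    fix x assume "x \<in> ?U"
    then obtain k0 where k0: "k0 \<in> {1..N}" and xo: "x \<in> Omega_k A B H h F f G g \<alpha> k0" by blast
    then obtain u where xF: "x \<in> polyh F f" and uG: "\<forall>i\<in>{1..k0}. u i \<in> polyh G g"
      and tr: "traj A B x u k0 \<in> (\<lambda>w. \<alpha> \<cdot>\<^sub>v w) ` polyh H h"
      and trF: "\<forall>j\<in>{1..k0}. traj A B x u j \<in> polyh F f"
      unfolding Omega_k_def by blast
    from tr obtain w where w: "w \<in> polyh H h" and tw: "traj A B x u k0 = \<alpha> \<cdot>\<^sub>v w" by blast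
    have xc: "x \<in> carrier_vec n" and xle: "vle (F *\<^sub>v x) f" using xF F unfolding polyh_def by auto
    have uc: "\<forall>i\<in>{1..k0}. u i \<in> carrier_vec m" and ule: "\<forall>i\<in>{1..k0}. vle (G *\<^sub>v u i) g"
      using uG G unfolding polyh_def by auto
    have wc: "w \<in> carrier_vec n" and wle: "vle (H *\<^sub>v w) h" using w H unfolding polyh_def by auto
    define Z where "Z = (\<lambda>k. if k = k0 then x else 0\<^sub>v n)"
    define V where "V = (\<lambda>k i. if k = k0 then u i else 0\<^sub>v m)"
    define L where "L = (\<lambda>k. if k = k0 then 1 else (0::real))"
    have c1: "\<forall>k\<in>{1..N}. Z k \<in> carrier_vec n" using xc by (auto simp: Z_def)
    have c2: "\<forall>k\<in>{1..N}. \<forall>i\<in>{1..k}. V k i \<in> carrier_vec m" using uc by (auto simp: V_def)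
    have c3: "x = vsum n Z {1..N}"
    proof (rule eq_vecI)
      show "dim_vec x = dim_vec (vsum n Z {1..N})" using xc by simp
      fix r assume "r < dim_vec (vsum n Z {1..N})"
      hence r: "r < n" by simp
      show "x $ r = vsum n Z {1..N} $ r" using r sum_delta_vec[OF _ k0 xc r] by (simp add: Z_def)
    qed
    have Z0: "\<And>k. k \<noteq> k0 \<Longrightarrow> Z k = 0\<^sub>v n" and V0: "\<And>k. k \<noteq> k0 \<Longrightarrow> V k = (\<lambda>i. 0\<^sub>v m)"
      and Zk0: "Z k0 = x" and Vk0: "V k0 = u"
      by (auto simp: Z_def V_def)
    have trz: "\<And>k j. k \<noteq> k0 \<Longrightarrow> traj A B (Z k) (V k) j = 0\<^sub>v n"
    proof -
      fix k j assume "k \<noteq> k0"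
      hence "traj A B (Z k) (V k) j = traj A B (0\<^sub>v n) (\<lambda>i. 0\<^sub>v m) j" by (simp add: Z0 V0)
      also have "\<dots> = A ^\<^sub>m j *\<^sub>v 0\<^sub>v n" by (rule traj_zero_u[OF A B]) auto
      also have "\<dots> = 0\<^sub>v n" using A by simp
      finally show "traj A B (Z k) (V k) j = 0\<^sub>v n" .
    qed
    have c4: "\<forall>k\<in>{1..N}. vle (H *\<^sub>v ((A ^\<^sub>m k) *\<^sub>v Z k) +
             vsum nh (\<lambda>i. H *\<^sub>v ((A ^\<^sub>m (k - 1 - i)) *\<^sub>v (B *\<^sub>v V k (k - i)))) {0..<k})
           ((\<alpha> * L k) \<cdot>\<^sub>v h)"
    proof
      fix k assume k: "k \<in> {1..N}"
      have zk: "Z k \<in> carrier_vec n" using c1 k by auto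
      have vk: "\<forall>i\<in>{1..k}. V k i \<in> carrier_vec m" using c2 k by auto
      have "vle (H *\<^sub>v traj A B (Z k) (V k) k) ((\<alpha> * L k) \<cdot>\<^sub>v h)"
      proof (cases "k = k0")
        case True
        have "vle (\<alpha> \<cdot>\<^sub>v (H *\<^sub>v w)) (\<alpha> \<cdot>\<^sub>v h)" using wle alpha_pos by (intro vle_scale) auto
        moreover have "H *\<^sub>v traj A B (Z k) (V k) k = \<alpha> \<cdot>\<^sub>v (H *\<^sub>v w)"
          using True Zk0 Vk0 tw H wc by (simp add: mult_mat_vec)
        ultimately show ?thesis using True by (simp add: L_def)
      next
        case False
        thus ?thesis using trz[OF False] H h by (simp add: L_def vle_zero)
      qed
      thus "vle (H *\<^sub>v ((A ^\<^sub>m k) *\<^sub>v Z k) +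
             vsum nh (\<lambda>i. H *\<^sub>v ((A ^\<^sub>m (k - 1 - i)) *\<^sub>v (B *\<^sub>v V k (k - i)))) {0..<k})
           ((\<alpha> * L k) \<cdot>\<^sub>v h)" using Htr[OF H zk vk] by simp
    qed
    have c5: "\<forall>k\<in>{1..N}. \<forall>j\<in>{1..k}. vle (F *\<^sub>v ((A ^\<^sub>m j) *\<^sub>v Z k) +
             vsum nf (\<lambda>i. F *\<^sub>v ((A ^\<^sub>m (j - 1 - i)) *\<^sub>v (B *\<^sub>v V k (j - i)))) {0..<j})
           (L k \<cdot>\<^sub>v f)"
    proof (intro ballI)
      fix k j assume k: "k \<in> {1..N}" and j: "j \<in> {1..k}"
      have zk: "Z k \<in> carrier_vec n" using c1 k by auto
      have vk: "\<forall>i\<in>{1..j}. V k i \<in> carrier_vec m" using c2 k j by auto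
      have "vle (F *\<^sub>v traj A B (Z k) (V k) j) (L k \<cdot>\<^sub>v f)"
      proof (cases "k = k0")
        case True
        thus ?thesis using trF j Zk0 Vk0 f unfolding polyh_def by (auto simp: L_def)
      next
        case False
        thus ?thesis using trz[OF False] F f by (simp add: L_def vle_zero)
      qed
      thus "vle (F *\<^sub>v ((A ^\<^sub>m j) *\<^sub>v Z k) +
             vsum nf (\<lambda>i. F *\<^sub>v ((A ^\<^sub>m (j - 1 - i)) *\<^sub>v (B *\<^sub>v V k (j - i)))) {0..<j})
           (L k \<cdot>\<^sub>v f)" using Htr[OF F zk vk] by simp
    qed
    have c6: "\<forall>k\<in>{1..N}. vle (F *\<^sub>v Z k) (L k \<cdot>\<^sub>v f)"
      using xle F f by (auto simp: Z_def L_def vle_zero)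
    have c7: "\<forall>k\<in>{1..N}. \<forall>i\<in>{1..k}. vle (G *\<^sub>v V k i) (L k \<cdot>\<^sub>v g)"
      using ule G g by (auto simp: V_def L_def vle_zero)
    have c8: "\<forall>k\<in>{1..N}. L k \<ge> 0" by (simp add: L_def)
    have c9: "(\<Sum>k\<in>{1..N}. L k) = 1" using k0 by (simp add: L_def)
    show "x \<in> ?R"
      unfolding mem_Collect_eq
      by (intro conjI exI[of _ Z] exI[of _ V] exI[of _ L] xc c1 c2 c3 c4 c5 c6 c7 c8 c9)
  qed
  have R_hull: "?R \<subseteq> vconvex hull ?U"
  proof
    fix x assume x: "x \<in> ?R"
    from x obtain z v lam where xc: "x \<in> carrier_vec n" and zc: "\<forall>k\<in>{1..N}. z k \<in> carrier_vec n"
      and vc: "\<forall>k\<in>{1..N}. \<forall>i\<in>{1..k}. v k i \<in> carrier_vec m" and xs: "x = vsum n z {1..N}"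
      and hc: "\<forall>k\<in>{1..N}. vle (H *\<^sub>v ((A ^\<^sub>m k) *\<^sub>v z k) +
             vsum nh (\<lambda>i. H *\<^sub>v ((A ^\<^sub>m (k - 1 - i)) *\<^sub>v (B *\<^sub>v v k (k - i)))) {0..<k})
           ((\<alpha> * lam k) \<cdot>\<^sub>v h)"
      and fc: "\<forall>k\<in>{1..N}. \<forall>j\<in>{1..k}. vle (F *\<^sub>v ((A ^\<^sub>m j) *\<^sub>v z k) +
             vsum nf (\<lambda>i. F *\<^sub>v ((A ^\<^sub>m (j - 1 - i)) *\<^sub>v (B *\<^sub>v v k (j - i)))) {0..<j})
           (lam k \<cdot>\<^sub>v f)"
      and f0: "\<forall>k\<in>{1..N}. vle (F *\<^sub>v z k) (lam k \<cdot>\<^sub>v f)"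
      and gc: "\<forall>k\<in>{1..N}. \<forall>i\<in>{1..k}. vle (G *\<^sub>v v k i) (lam k \<cdot>\<^sub>v g)"
      and l0: "\<forall>k\<in>{1..N}. lam k \<ge> 0" and l1: "(\<Sum>k\<in>{1..N}. lam k) = 1"
      by blast
    define K where "K = {k \<in> {1..N}. lam k > 0}"
    have finK: "finite K" and Ksub: "K \<subseteq> {1..N}" unfolding K_def by auto
    have lam0: "\<forall>k\<in>{1..N} - K. lam k = 0" using l0 unfolding K_def by force
    have lsum: "sum lam K = 1"
      using l1 sum.mono_neutral_right[OF _ Ksub lam0] by simp
    have Kne: "K \<noteq> {}" using lsum by auto
    have zero: "\<forall>k\<in>{1..N} - K. z k = 0\<^sub>v n"
    proof
      fix k assume k: "k \<in> {1..N} - K"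
      hence lk: "lam k = 0" using lam0 by auto
      have kN: "k \<in> {1..N}" using k by auto
      have zk: "z k \<in> carrier_vec n" using zc k by auto
      have vk: "\<forall>i\<in>{1..k}. v k i \<in> carrier_vec m" using vc k by auto
      have v0: "\<forall>i\<in>{1..k}. v k i = 0\<^sub>v m"
      proof
        fix i assume i: "i \<in> {1..k}"
        show "v k i = 0\<^sub>v m"
          by (rule bounded_rec[OF G U_bdd zU]) (use vk i gc[rule_format, OF kN i] lk in auto)
      qed
      have "vle (H *\<^sub>v traj A B (z k) (v k) k) ((\<alpha> * lam k) \<cdot>\<^sub>v h)"
        using hc[rule_format, of k] k unfolding Htr[OF H zk vk] by auto
      moreover have "traj A B (z k) (v k) k = A ^\<^sub>m k *\<^sub>v z k" by (rule traj_zero_u[OF A B zk v0])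
      ultimately have "vle (H *\<^sub>v (A ^\<^sub>m k *\<^sub>v z k)) (0 \<cdot>\<^sub>v h)" using lk by simp
      hence "A ^\<^sub>m k *\<^sub>v z k = 0\<^sub>v n" by (rule bounded_rec[OF H Omega_bdd zO pow_vec_carrier[OF A]])
      thus "z k = 0\<^sub>v n" by (rule inj_pow[OF A Ainv zk])
    qed
    define y where "y = (\<lambda>k. (1 / lam k) \<cdot>\<^sub>v z k)"
    have yc: "\<forall>k\<in>K. y k \<in> carrier_vec n" using zc Ksub unfolding y_def by auto
    have yO: "\<forall>k\<in>K. y k \<in> Omega_k A B H h F f G g \<alpha> k"
    proof
      fix k assume kK: "k \<in> K"
      hence k: "k \<in> {1..N}" and lp: "lam k > 0" unfolding K_def by auto
      have zk: "z k \<in> carrier_vec n" using zc k by auto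
      have vk: "\<forall>i\<in>{1..k}. v k i \<in> carrier_vec m" using vc k by auto
      define u where "u = (\<lambda>i. (1 / lam k) \<cdot>\<^sub>v v k i)"
      have yF: "y k \<in> polyh F f" unfolding polyh_def y_def
        using F zk scale_ineq[OF F zk f _ lp] f0 k by auto
      have uG: "\<forall>i\<in>{1..k}. u i \<in> polyh G g" unfolding polyh_def u_def
        using G vk scale_ineq[OF G _ g _ lp] gc k by auto
      have tj: "traj A B (y k) u j = (1 / lam k) \<cdot>\<^sub>v traj A B (z k) (v k) j" if j: "j \<in> {1..k}" for j
        unfolding y_def u_def by (rule traj_scale[OF A B zk]) (use vk j in auto)
      have trF: "\<forall>j\<in>{1..k}. traj A B (y k) u j \<in> polyh F f"
      proof
        fix j assume j: "j \<in> {1..k}"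
        have vj: "\<forall>i\<in>{1..j}. v k i \<in> carrier_vec m" using vk j by auto
        have "vle (F *\<^sub>v traj A B (z k) (v k) j) (lam k \<cdot>\<^sub>v f)"
          using fc[rule_format, OF k j] unfolding Htr[OF F zk vj] .
        hence "vle (F *\<^sub>v ((1 / lam k) \<cdot>\<^sub>v traj A B (z k) (v k) j)) f"
          by (rule scale_ineq[OF F traj_carrier[OF A] f _ lp])
        thus "traj A B (y k) u j \<in> polyh F f" unfolding polyh_def tj[OF j] using F A by auto
      qed
      define w where "w = (1 / (\<alpha> * lam k)) \<cdot>\<^sub>v traj A B (z k) (v k) k"
      have "vle (H *\<^sub>v traj A B (z k) (v k) k) ((\<alpha> * lam k) \<cdot>\<^sub>v h)"
        using hc[rule_format, OF k] unfolding Htr[OF H zk vk] .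
      hence "vle (H *\<^sub>v w) h" unfolding w_def
        by (rule scale_ineq[OF H traj_carrier[OF A] h]) (use alpha_pos lp in simp)
      hence wH: "w \<in> polyh H h" unfolding polyh_def w_def using H A by auto
      have k1: "k \<in> {1..k}" using k by auto
      have "traj A B (y k) u k = \<alpha> \<cdot>\<^sub>v w" unfolding tj[OF k1] w_def
        using alpha_pos lp A by (intro eq_vecI) auto
      hence trH: "traj A B (y k) u k \<in> (\<lambda>w. \<alpha> \<cdot>\<^sub>v w) ` polyh H h" using wH by blast
      show "y k \<in> Omega_k A B H h F f G g \<alpha> k"
        unfolding Omega_k_def using yF uG trH trF by blast
    qed
    have xsum: "x = vsum n (\<lambda>k. lam k \<cdot>\<^sub>v y k) K"
    proof (rule eq_vecI)
      show "dim_vec x = dim_vec (vsum n (\<lambda>k. lam k \<cdot>\<^sub>v y k) K)" using xc by simp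
      fix r assume "r < dim_vec (vsum n (\<lambda>k. lam k \<cdot>\<^sub>v y k) K)"
      hence r: "r < n" by simp
      have "x $ r = (\<Sum>k\<in>{1..N}. z k $ r)" using r by (simp add: xs)
      also have "\<dots> = (\<Sum>k\<in>K. z k $ r)"
        by (rule sum.mono_neutral_right[OF _ Ksub]) (use zero r in auto)
      also have "\<dots> = (\<Sum>k\<in>K. (lam k \<cdot>\<^sub>v y k) $ r)"
      proof (rule sum.cong[OF refl])
        fix k assume kK: "k \<in> K"
        hence "lam k > 0" "dim_vec (z k) = n" using zc Ksub unfolding K_def by auto
        thus "z k $ r = (lam k \<cdot>\<^sub>v y k) $ r" using r unfolding y_def by simp
      qed
      also have "\<dots> = vsum n (\<lambda>k. lam k \<cdot>\<^sub>v y k) K $ r" using r by simp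
      finally show "x $ r = vsum n (\<lambda>k. lam k \<cdot>\<^sub>v y k) K $ r" .
    qed
    show "x \<in> vconvex hull ?U"
      unfolding hull_def
    proof (rule InterI)
      fix T assume "T \<in> {t. vconvex t \<and> ?U \<subseteq> t}"
      hence T: "vconvex T" and UT: "?U \<subseteq> T" by auto
      have "\<forall>k\<in>K. y k \<in> T \<and> y k \<in> carrier_vec n" using yO yc UT Ksub by blast
      moreover have "\<forall>k\<in>K. lam k \<ge> 0" unfolding K_def by auto
      ultimately have "vsum n (\<lambda>k. lam k \<cdot>\<^sub>v y k) K \<in> T"
        by (intro conv_comb[OF finK Kne T] lsum)
      thus "x \<in> T" using xsum by simp
    qed
  qed
  show ?thesis by (rule equalityI[OF hull_minimal[OF U_R, of vconvex, OF R_conv] R_hull])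
qed


theorem theorem3:
  fixes A B H F G :: "real mat" and h f g :: "real vec" and n m nh nf ng N :: nat
    and \<beta> \<alpha> :: real
  assumes A: "A \<in> carrier_mat n n" and Ainv: "invertible_mat A"
    and B: "B \<in> carrier_mat n m" and N: "N \<ge> 1"
    and H: "H \<in> carrier_mat nh n" and h: "h \<in> carrier_vec nh"
    and F: "F \<in> carrier_mat nf n" and f: "f \<in> carrier_vec nf"
    and G: "G \<in> carrier_mat ng m" and g: "g \<in> carrier_vec ng"
    and Omega_bdd: "vbounded (polyh H h)" and U_bdd: "vbounded (polyh G g)"
    and zO: "0\<^sub>v n \<in> polyh H h" and zX: "0\<^sub>v n \<in> polyh F f" and zU: "0\<^sub>v m \<in> polyh G g"
    and beta: "\<beta> \<in> lp_feasible A B H h F f G g N" and beta_min: "\<forall>\<gamma>\<in>lp_feasible A B H h F f G g N. \<beta> \<le> \<gamma>" and beta_pos: "\<beta> > 0"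
    and alpha: "\<alpha> = inverse \<beta>"
  shows "vconvex hull (\<Union>k\<in>{1..N}. Omega_k A B H h F f G g \<alpha> k) =
    {x \<in> carrier_vec n. \<exists>z v lam.
        (\<forall>k\<in>{1..N}. z k \<in> carrier_vec n) \<and>
        (\<forall>k\<in>{1..N}. \<forall>i\<in>{1..k}. v k i \<in> carrier_vec m) \<and>
        x = vsum n z {1..N} \<and>
        (\<forall>k\<in>{1..N}. vle (H *\<^sub>v ((A ^\<^sub>m k) *\<^sub>v z k) +
             vsum nh (\<lambda>i. H *\<^sub>v ((A ^\<^sub>m (k - 1 - i)) *\<^sub>v (B *\<^sub>v v k (k - i)))) {0..<k})
           ((\<alpha> * lam k) \<cdot>\<^sub>v h)) \<and>
        (\<forall>k\<in>{1..N}. \<forall>j\<in>{1..k}. vle (F *\<^sub>v ((A ^\<^sub>m j) *\<^sub>v z k) +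
             vsum nf (\<lambda>i. F *\<^sub>v ((A ^\<^sub>m (j - 1 - i)) *\<^sub>v (B *\<^sub>v v k (j - i)))) {0..<j})
           (lam k \<cdot>\<^sub>v f)) \<and>
        (\<forall>k\<in>{1..N}. vle (F *\<^sub>v z k) (lam k \<cdot>\<^sub>v f)) \<and>
        (\<forall>k\<in>{1..N}. \<forall>i\<in>{1..k}. vle (G *\<^sub>v v k i) (lam k \<cdot>\<^sub>v g)) \<and>
        (\<forall>k\<in>{1..N}. lam k \<ge> 0) \<and> (\<Sum>k\<in>{1..N}. lam k) = 1}"
  using assms by (rule main)

end
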